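(* Let $A\in\mathbb{M}_n$ and let $\Omega$ be any region contained in $\mathbb{C}\setminus\sigma(A)$. Then for all $z\in\Omega$, \[s_1(R_A(z))<\sup_{\zeta\in\Omega}s_1(R_A(\zeta))\quad\text{and}\quad s_n(R_A(z))>\inf_{\zeta\in\Omega}s_n(R_A(\zeta)).\] In particular, the functions $z\mapsto s_1(R_A(z))$ and $z\mapsto s_n(R_A(z))$ are nonconstant on $\Omega$.
   Context: $\mathbb{M}_n$ is the set of $n\times n$ complex matrices, $\sigma(A)$ is the spectrum (set of eigenvalues) of $A$, and $R_A(z)=(A-zI)^{-1}$ for $z\in\mathbb{C}\setminus\sigma(A)$ is the resolvent. A region is a nonempty open connected subset of $\mathbb{C}$. For $B\in\mathbb{M}_n$, the singular values $s_1(B)\geq\cdots\geq s_n(B)$ are the nonnegative square roots of the eigenvalues of $B^*B$ in nonincreasing order. *)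

theory Defs
  imports "HOL-Analysis.Analysis"
begin

text \<open>n x n complex matrices are modelled as complex^'n^'n, with n = CARD('n).\<close>

definition mspectrum :: "complex^'n^'n \<Rightarrow> complex set" where
  "mspectrum A = {z. \<exists>v::complex^'n. v \<noteq> 0 \<and> A *v v = z *s v}"

definition resolvent :: "complex^'n^'n \<Rightarrow> complex \<Rightarrow> complex^'n^'n" where
  "resolvent A z = matrix_inv (A - mat z)"

definition conj_transpose :: "complex^'n^'n \<Rightarrow> complex^'n^'n" where
  "conj_transpose B = (\<chi> i j. cnj (B $ j $ i))"

text \<open>The (real) eigenvalues of B* B; all eigenvalues of B* B are real and nonnegative.\<close>
definition gram_eigs :: "complex^'n^'n \<Rightarrow> real set" where
  "gram_eigs B = {t. complex_of_real t \<in> mspectrum (conj_transpose B ** B)}"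

definition smax :: "complex^'n^'n \<Rightarrow> real" where
  "smax B = sqrt (Max (gram_eigs B))"

definition smin :: "complex^'n^'n \<Rightarrow> real" where
  "smin B = sqrt (Min (gram_eigs B))"

end

theory Submission
  imports Defs "HOL-Complex_Analysis.Conformal_Mappings"
begin


lemma inner_complex_cnj: "inner (a * b) (c::complex) = inner b (cnj a * c)"
  by (simp add: inner_complex_def algebra_simps)

lemma adj_inner:
  fixes C :: "complex^'n^'n"
  shows "(C *v x) \<bullet> y = x \<bullet> (conj_transpose C *v y)"
proof -
  have "(C *v x) \<bullet> y = (\<Sum>i\<in>UNIV. \<Sum>j\<in>UNIV. (C$i$j * x$j) \<bullet> y$i)"
    by (simp add: inner_vec_def matrix_vector_mult_def inner_sum_left)
  also have "\<dots> = (\<Sum>j\<in>UNIV. \<Sum>i\<in>UNIV. x$j \<bullet> (cnj (C$i$j) * y$i))"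
    by (subst sum.swap) (simp add: inner_complex_cnj)
  also have "\<dots> = x \<bullet> (conj_transpose C *v y)"
    by (simp add: inner_vec_def matrix_vector_mult_def inner_sum_right conj_transpose_def)
  finally show ?thesis .
qed

lemma conj_transpose_gram: "conj_transpose (conj_transpose B ** B) = conj_transpose B ** (B::complex^'n^'n)"
  by (simp add: conj_transpose_def matrix_matrix_mult_def vec_eq_iff mult.commute)

lemma norm_sq_gram:
  fixes B :: "complex^'n^'n"
  shows "(norm (B *v x))^2 = x \<bullet> ((conj_transpose B ** B) *v x)"
  by (simp add: power2_norm_eq_inner adj_inner matrix_vector_mul_assoc)

lemma gram_sym:
  fixes B :: "complex^'n^'n"
  shows "((conj_transpose B ** B) *v x) \<bullet> y = x \<bullet> ((conj_transpose B ** B) *v y)"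
  by (metis adj_inner conj_transpose_gram)

lemma ofreal_scalar: "complex_of_real t *s x = t *\<^sub>R (x::complex^'n)"
  by (simp add: vec_eq_iff of_real_def)

lemma mat_mult_scaleR: "(B::complex^'n^'m) *v (t *\<^sub>R x) = t *\<^sub>R (B *v x)"
  using linear_scale[OF matrix_vector_mul_linear] by blast

lemma psd_zero:
  fixes D :: "'a::real_inner \<Rightarrow> 'a"
  assumes lin: "linear D" and sym: "\<And>x y. D x \<bullet> y = x \<bullet> D y"
    and psd: "\<And>x. 0 \<le> x \<bullet> D x" and v: "v \<bullet> D v = 0"
  shows "D v = 0"
proof (rule ccontr)
  assume ne: "D v \<noteq> 0"
  define a where "a = D v \<bullet> D v"
  define b where "b = D v \<bullet> D (D v)"
  have a: "a > 0" using ne by (simp add: a_def)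
  have b: "b \<ge> 0" using psd by (simp add: b_def)
  have key: "(v - t *\<^sub>R D v) \<bullet> D (v - t *\<^sub>R D v) = - 2*t*a + t^2 * b" for t
  proof -
    have hD: "D (v - t *\<^sub>R D v) = D v - t *\<^sub>R D (D v)"
      using lin by (simp add: linear_diff linear_scale)
    have "v \<bullet> D (D v) = a" using sym[of v "D v"] by (simp add: a_def)
    moreover have "D v \<bullet> v = 0" using v by (simp add: inner_commute)
    ultimately show ?thesis unfolding hD
      by (simp add: inner_diff_left inner_diff_right v a_def b_def power2_eq_square algebra_simps)
  qed
  define t where "t = a / (b+1)"
  have t: "t > 0" using a b by (simp add: t_def)
  have "0 \<le> - 2*t*a + t^2 * b" using psd key by metis
  then have "2*t*a \<le> t * (t * b)" by (simp add: power2_eq_square algebra_simps)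
  then have "2*a \<le> t*b" using t by simp
  moreover have "t * b < a" using a b by (simp add: t_def field_simps)
  ultimately show False using a by simp
qed

lemma gram_eig_vec:
  fixes B :: "complex^'n^'n"
  assumes "t \<in> gram_eigs B"
  obtains x where "x \<noteq> 0" "(conj_transpose B ** B) *v x = t *\<^sub>R x"
  using assms by (auto simp: gram_eigs_def mspectrum_def ofreal_scalar)

lemma gram_eig_norm:
  fixes B :: "complex^'n^'n"
  assumes "(conj_transpose B ** B) *v x = t *\<^sub>R x"
  shows "t * (norm x)^2 = (norm (B *v x))^2"
proof -
  have "(norm (B *v x))^2 = x \<bullet> ((conj_transpose B ** B) *v x)" by (rule norm_sq_gram)
  also have "\<dots> = t * (norm x)^2" by (simp add: assms power2_norm_eq_inner)
  finally show ?thesis by simp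
qed

lemma gram_finite:
  fixes B :: "complex^'n^'n"
  shows "finite (gram_eigs B)"
proof -
  let ?M = "conj_transpose B ** B"
  define e where "e t = (SOME x. x \<noteq> 0 \<and> ?M *v x = t *\<^sub>R x)" for t
  have e: "e t \<noteq> 0 \<and> ?M *v e t = t *\<^sub>R e t" if tin: "t \<in> gram_eigs B" for t
    unfolding e_def by (rule someI_ex) (metis gram_eig_vec[OF that])
  have inj: "inj_on e (gram_eigs B)"
  proof (rule inj_onI)
    fix s t assume st: "s \<in> gram_eigs B" "t \<in> gram_eigs B" "e s = e t"
    then have "s *\<^sub>R e s = t *\<^sub>R e s" using e by metis
    then show "s = t" using e[OF st(1)] by simp
  qed
  have "pairwise orthogonal (e ` gram_eigs B)"
  proof (clarsimp simp: pairwise_def)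
    fix s t assume st: "s \<in> gram_eigs B" "t \<in> gram_eigs B" "e s \<noteq> e t"
    then have "s \<noteq> t" by auto
    have "s * (e s \<bullet> e t) = (?M *v e s) \<bullet> e t" using e[OF st(1)] by simp
    also have "\<dots> = e s \<bullet> (?M *v e t)" by (rule gram_sym)
    also have "\<dots> = t * (e s \<bullet> e t)" using e[OF st(2)] by simp
    finally show "orthogonal (e s) (e t)" using \<open>s \<noteq> t\<close> by (simp add: orthogonal_def)
  qed
  then have "finite (e ` gram_eigs B)" by (rule pairwise_orthogonal_imp_finite)
  then show ?thesis using inj finite_imageD by blast
qed

lemma sphere_nonempty: "sphere (0::complex^'n) 1 \<noteq> {}"
proof -
  obtain b :: "complex^'n" where "b \<in> Basis" using nonempty_Basis by blast
  then have "norm b = 1" by (simp add: norm_Basis)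
  then show ?thesis by (auto simp: sphere_def)
qed

lemma cont_normB: "continuous_on S (\<lambda>x. norm ((B::complex^'n^'n) *v x))"
  by (intro continuous_intros linear_continuous_on linear_conv_bounded_linear[THEN iffD1]
      matrix_vector_mul_linear)

lemma scale_to_sphere:
  fixes B :: "complex^'n^'n"
  assumes "x \<noteq> 0"
  shows "norm (x /\<^sub>R norm x) = 1" "norm (B *v (x /\<^sub>R norm x)) = norm (B *v x) / norm x"
  using assms by (auto simp: mat_mult_scaleR divide_inverse_commute)

lemma smax_props:
  fixes B :: "complex^'n^'n"
  obtains v where "norm v = 1" "norm (B *v v) = smax B" "\<And>x. norm (B *v x) \<le> smax B * norm x"
proof -
  let ?M = "conj_transpose B ** B"
  obtain v where v: "v \<in> sphere 0 1" and vmax: "\<And>y. y \<in> sphere 0 1 \<Longrightarrow> norm (B *v y) \<le> norm (B *v v)"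
    using continuous_attains_sup[OF compact_sphere sphere_nonempty cont_normB] by blast
  have nv: "norm v = 1" using v by simp
  define l where "l = (norm (B *v v))^2"
  have bnd: "norm (B *v x) \<le> norm (B *v v) * norm x" for x
  proof (cases "x = 0")
    case False
    have "norm (B *v (x /\<^sub>R norm x)) \<le> norm (B *v v)"
      by (rule vmax) (use scale_to_sphere(1)[OF False] in simp)
    moreover have "norm (B *v x) = norm x * norm (B *v (x /\<^sub>R norm x))"
      using scale_to_sphere(2)[OF False, of B] False by simp
    ultimately show ?thesis by (simp add: mult.commute mult_left_mono)
  qed simp
  define D where "D x = l *\<^sub>R x - ?M *v x" for x
  have linD: "linear D" unfolding D_def
    using linear_add[OF matrix_vector_mul_linear[of ?M]]
    by (intro linearI) (simp_all add: mat_mult_scaleR algebra_simps)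
  have qD: "x \<bullet> D x = l * (norm x)^2 - (norm (B *v x))^2" for x
    by (simp add: D_def inner_diff_right adj_inner matrix_vector_mul_assoc power2_norm_eq_inner)
  have "D v = 0"
  proof (rule psd_zero[OF linD])
    show "D x \<bullet> y = x \<bullet> D y" for x y
      using gram_sym[of B x y] by (simp add: D_def inner_diff_left inner_diff_right inner_commute)
    show "0 \<le> x \<bullet> D x" for x
      unfolding qD l_def using bnd[of x] 
      by (simp add: power_mult_distrib[symmetric] power_mono)
    show "v \<bullet> D v = 0" unfolding qD l_def nv by simp
  qed
  then have ev: "?M *v v = l *\<^sub>R v" by (simp add: D_def)
  have lin: "l \<in> gram_eigs B"
    unfolding gram_eigs_def mspectrum_def using ev nv by (auto simp: ofreal_scalar intro!: exI[of _ v])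
  have "t \<le> l" if tin: "t \<in> gram_eigs B" for t
  proof -
    obtain x where x: "x \<noteq> 0" "?M *v x = t *\<^sub>R x" using gram_eig_vec[OF tin] by blast
    have "t * (norm x)^2 = (norm (B *v x))^2" by (rule gram_eig_norm[OF x(2)])
    also have "\<dots> \<le> l * (norm x)^2"
      unfolding l_def using bnd[of x] by (simp add: power_mult_distrib[symmetric] power_mono)
    finally show ?thesis using x by simp
  qed
  then have "Max (gram_eigs B) = l" using lin gram_finite by (intro Max_eqI) auto
  then have sm: "smax B = norm (B *v v)" by (simp add: smax_def l_def)
  show ?thesis using that[OF nv sm[symmetric]] bnd sm by simp
qed

lemma smin_props:
  fixes B :: "complex^'n^'n"
  obtains v where "norm v = 1" "norm (B *v v) = smin B" "\<And>x. smin B * norm x \<le> norm (B *v x)"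
proof -
  let ?M = "conj_transpose B ** B"
  obtain v where v: "v \<in> sphere 0 1" and vmin: "\<And>y. y \<in> sphere 0 1 \<Longrightarrow> norm (B *v v) \<le> norm (B *v y)"
    using continuous_attains_inf[OF compact_sphere sphere_nonempty cont_normB] by blast
  have nv: "norm v = 1" using v by simp
  define l where "l = (norm (B *v v))^2"
  have bnd: "norm (B *v v) * norm x \<le> norm (B *v x)" for x
  proof (cases "x = 0")
    case False
    have "norm (B *v v) \<le> norm (B *v (x /\<^sub>R norm x))"
      by (rule vmin) (use scale_to_sphere(1)[OF False] in simp)
    moreover have "norm (B *v x) = norm x * norm (B *v (x /\<^sub>R norm x))"
      using scale_to_sphere(2)[OF False, of B] False by simp
    ultimately show ?thesis by (simp add: mult.commute mult_left_mono)
  qed simp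
  define D where "D x = ?M *v x - l *\<^sub>R x" for x
  have linD: "linear D" unfolding D_def
    using linear_add[OF matrix_vector_mul_linear[of ?M]]
    by (intro linearI) (simp_all add: mat_mult_scaleR algebra_simps)
  have qD: "x \<bullet> D x = (norm (B *v x))^2 - l * (norm x)^2" for x
    by (simp add: D_def inner_diff_right adj_inner matrix_vector_mul_assoc power2_norm_eq_inner)
  have "D v = 0"
  proof (rule psd_zero[OF linD])
    show "D x \<bullet> y = x \<bullet> D y" for x y
      using gram_sym[of B x y] by (simp add: D_def inner_diff_left inner_diff_right inner_commute)
    show "0 \<le> x \<bullet> D x" for x
      unfolding qD l_def using bnd[of x] 
      by (simp add: power_mult_distrib[symmetric] power_mono)
    show "v \<bullet> D v = 0" unfolding qD l_def nv by simp
  qed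
  then have ev: "?M *v v = l *\<^sub>R v" by (simp add: D_def)
  have lin: "l \<in> gram_eigs B"
    unfolding gram_eigs_def mspectrum_def using ev nv by (auto simp: ofreal_scalar intro!: exI[of _ v])
  have "l \<le> t" if tin: "t \<in> gram_eigs B" for t
  proof -
    obtain x where x: "x \<noteq> 0" "?M *v x = t *\<^sub>R x" using gram_eig_vec[OF tin] by blast
    have "l * (norm x)^2 \<le> (norm (B *v x))^2"
      unfolding l_def using bnd[of x] by (simp add: power_mult_distrib[symmetric] power_mono)
    also have "\<dots> = t * (norm x)^2" by (rule gram_eig_norm[OF x(2), symmetric])
    finally show ?thesis using x by simp
  qed
  then have "Min (gram_eigs B) = l" using lin gram_finite by (intro Min_eqI) auto
  then have sm: "smin B = norm (B *v v)" by (simp add: smin_def l_def)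
  show ?thesis using that[OF nv sm[symmetric]] bnd sm by simp
qed



lemma mat_mult_vec: "mat z *v x = z *s (x::complex^'n)"
proof -
  have "(\<Sum>j\<in>UNIV. (if i = j then z else 0) * x$j) = z * x$i" for i
  proof -
    have "(\<Sum>j\<in>UNIV. (if i = j then z else 0) * x$j) = (\<Sum>j\<in>UNIV. if i = j then z * x$j else 0)"
      by (rule sum.cong) auto
    then show ?thesis by simp
  qed
  then show ?thesis by (simp add: vec_eq_iff matrix_vector_mult_def mat_def)
qed

lemma shift_mult: "(A - mat z) *v x = A *v x - z *s (x::complex^'n)"
  by (simp add: matrix_vector_mult_diff_rdistrib mat_mult_vec)

lemma norm_smult_vec: "norm (c *s (x::complex^'n)) = norm c * norm x"
  unfolding norm_vec_def by (simp add: L2_set_right_distrib norm_mult)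

lemma det_nz_of_nspec:
  fixes A :: "complex^'n^'n"
  assumes "z \<notin> mspectrum A" shows "det (A - mat z) \<noteq> 0"
proof
  assume "det (A - mat z) = 0"
  then have "\<not> invertible (A - mat z)" by (simp add: invertible_det_nz)
  then have "\<not>(\<exists>B. B ** (A - mat z) = mat 1)" by (metis invertible_def matrix_left_right_inverse)
  then obtain x where x: "(A - mat z) *v x = 0" "x \<noteq> 0" using matrix_left_invertible_ker by blast
  then have "A *v x = z *s x" by (simp add: shift_mult)
  then show False using assms x(2) by (auto simp: mspectrum_def)
qed

lemma res_inv:
  fixes A :: "complex^'n^'n"
  assumes "det (A - mat z) \<noteq> 0"
  shows "(A - mat z) ** resolvent A z = mat 1" "resolvent A z ** (A - mat z) = mat 1"
proof -
  have "\<exists>B. (A - mat z) ** B = mat 1 \<and> B ** (A - mat z) = mat 1"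
    using assms by (simp add: invertible_det_nz[symmetric] invertible_def)
  then have "(A - mat z) ** resolvent A z = mat 1 \<and> resolvent A z ** (A - mat z) = mat 1"
    unfolding resolvent_def matrix_inv_def by (rule someI_ex)
  then show "(A - mat z) ** resolvent A z = mat 1" "resolvent A z ** (A - mat z) = mat 1" by auto
qed

lemma res_solves:
  fixes A :: "complex^'n^'n"
  assumes "det (A - mat z) \<noteq> 0"
  shows "(A - mat z) *v (resolvent A z *v v) = v" "resolvent A z *v ((A - mat z) *v v) = v"
  using res_inv[OF assms] by (simp_all add: matrix_vector_mul_assoc)

lemma large_z:
  fixes A :: "complex^'n^'n"
  assumes "smax A < norm z"
  shows "det (A - mat z) \<noteq> 0" "norm (resolvent A z *v v) \<le> norm v / (norm z - smax A)"
proof -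
  obtain v0 where "norm v0 = 1" "norm (A *v v0) = smax A" and u: "\<And>x. norm (A *v x) \<le> smax A * norm x"
    using smax_props[of A] by blast
  show nz: "det (A - mat z) \<noteq> 0"
  proof (rule det_nz_of_nspec, rule notI)
    assume "z \<in> mspectrum A"
    then obtain x where x: "x \<noteq> 0" "A *v x = z *s x" by (auto simp: mspectrum_def)
    then have "norm z * norm x \<le> smax A * norm x" using u[of x] by (simp add: norm_smult_vec)
    then have "norm z \<le> smax A" using x(1) by simp
    then show False using assms by simp
  qed
  define y where "y = resolvent A z *v v"
  have "(A - mat z) *v y = v" unfolding y_def by (rule res_solves(1)[OF nz])
  then have h: "A *v y - z *s y = v" by (simp only: shift_mult)
  have zy: "z *s y = A *v y - v" unfolding h[symmetric] by simp
  have "norm z * norm y = norm (A *v y - v)" by (simp only: zy[symmetric] norm_smult_vec)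
  also have "\<dots> \<le> norm (A *v y) + norm v" by (rule norm_triangle_ineq4)
  also have "\<dots> \<le> smax A * norm y + norm v" using u[of y] by simp
  finally have "norm y * (norm z - smax A) \<le> norm v" by (simp add: algebra_simps)
  then show "norm (resolvent A z *v v) \<le> norm v / (norm z - smax A)"
    using assms by (simp add: y_def pos_le_divide_eq)
qed

lemma fac: "poly [:(A::complex^'n^'n)$i$j, if i = j then -1 else 0:] z = (A - mat z)$i$j"
  by (simp add: mat_def)

lemma det_poly:
  fixes A :: "complex^'n^'n"
  shows "\<exists>p. \<forall>z. det (A - mat z) = poly p z"
proof
  let ?p = "(\<Sum>\<pi>\<in>{\<pi>. \<pi> permutes (UNIV::'n set)}. smult (of_int (sign \<pi>))
      (\<Prod>i\<in>UNIV. [:A$i$(\<pi> i), if i = \<pi> i then -1 else 0:]))"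
  show "\<forall>z. det (A - mat z) = poly ?p z"
  proof
    fix z
    show "det (A - mat z) = poly ?p z"
      unfolding det_def poly_sum poly_smult poly_prod fac by (rule refl)
  qed
qed
lemma spec_finite:
  fixes A :: "complex^'n^'n"
  shows "finite {z. det (A - mat z) = 0}"
proof -
  obtain p where p: "\<And>z. det (A - mat z) = poly p z" using det_poly[of A] by blast
  define z0 where "z0 = complex_of_real (smax A + 1)"
  obtain v where nv: "norm (A *v v) = smax A" using smax_props[of A] by blast
  have "smax A \<ge> 0" unfolding nv[symmetric] by (rule norm_ge_zero)
  then have "smax A < norm z0"
    unfolding z0_def by simp
  then have "det (A - mat z0) \<noteq> 0" by (rule large_z(1))
  then have "poly p z0 \<noteq> 0" by (simp add: p)
  then have "p \<noteq> 0" by auto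
  then show ?thesis using poly_roots_finite p by simp
qed

lemma det_holo:
  assumes "\<And>i j. (\<lambda>z. F z $ i $ j) holomorphic_on S"
  shows "(\<lambda>z. det (F z)) holomorphic_on S"
  unfolding det_def by (intro holomorphic_intros assms)

lemma res_holo:
  fixes A :: "complex^'n^'n"
  shows "(\<lambda>z. (resolvent A z *v v) $ k) holomorphic_on {z. det (A - mat z) \<noteq> 0}"
proof (rule holomorphic_transform)
  let ?S = "{z. det (A - mat z) \<noteq> 0}"
  have ent: "(\<lambda>z. (A - mat z)$i$j) holomorphic_on ?S" for i j
    by (cases "i = j") (simp_all add: mat_def holomorphic_on_const holomorphic_on_diff holomorphic_on_id)
  have ent2: "(\<lambda>z. (\<chi> i j. if j = k then v$i else (A - mat z)$i$j) $ i $ j) holomorphic_on ?S" for i j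
    using ent[of i j] by (cases "j = k") (simp_all add: holomorphic_on_const)
  show "(\<lambda>z. det (\<chi> i j. if j = k then v$i else (A - mat z)$i$j) / det (A - mat z)) holomorphic_on ?S"
    by (rule holomorphic_on_divide) (rule det_holo, rule ent2, rule det_holo, rule ent, simp)
  fix z assume "z \<in> ?S"
  then have nz: "det (A - mat z) \<noteq> 0" by simp
  show "det (\<chi> i j. if j = k then v$i else (A - mat z)$i$j) / det (A - mat z) = (resolvent A z *v v) $ k"
    using cramer[OF nz, THEN iffD1, OF res_solves(1)[OF nz]] by (simp add: vec_eq_iff)
qed

lemma complex_cs:
  fixes w y :: "complex^'n"
  shows "norm (\<Sum>i\<in>UNIV. cnj (w$i) * y$i) \<le> norm w * norm y"
proof -
  have "norm (\<Sum>i\<in>UNIV. cnj (w$i) * y$i) \<le> (\<Sum>i\<in>UNIV. \<bar>norm (w$i)\<bar> * \<bar>norm (y$i)\<bar>)"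
    by (rule order_trans[OF norm_sum]) (simp add: norm_mult)
  also have "\<dots> \<le> norm w * norm y"
    unfolding norm_vec_def by (rule L2_set_mult_ineq)
  finally show ?thesis .
qed

lemma self_sum:
  fixes w :: "complex^'n"
  shows "(\<Sum>i\<in>UNIV. cnj (w$i) * w$i) = complex_of_real ((norm w)^2)"
proof -
  have "(norm w)^2 = (\<Sum>i\<in>UNIV. (norm (w$i))^2)"
    unfolding norm_vec_def L2_set_def by (simp add: sum_nonneg)
  then have "complex_of_real ((norm w)^2) = (\<Sum>i\<in>UNIV. complex_of_real ((norm (w$i))^2))" by simp
  also have "\<dots> = (\<Sum>i\<in>UNIV. cnj (w$i) * w$i)"
    by (rule sum.cong) (simp_all only: complex_norm_square mult.commute)
  finally show ?thesis by simp
qed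



lemma parallelogram_vec:
  fixes a b :: "complex^'n"
  shows "(norm (a - b))^2 + (norm (a + b))^2 = 2 * (norm a)^2 + 2 * (norm b)^2"
  by (simp add: power2_norm_eq_inner inner_add_left inner_add_right inner_diff_left
      inner_diff_right inner_commute)

lemma shift_eq:
  fixes A :: "complex^'n^'n"
  shows "(A - mat (z + c)) *v y = (A - mat z) *v y - c *s y"
  unfolding shift_mult by (simp add: vec_eq_iff algebra_simps)

lemma smax_bound: "norm ((B::complex^'n^'n) *v x) \<le> smax B * norm x"
proof (rule smax_props[of B])
  fix v assume "norm v = 1" "norm (B *v v) = smax B" and h: "\<And>x. norm (B *v x) \<le> smax B * norm x"
  show "norm (B *v x) \<le> smax B * norm x" by (rule h)
qed

lemma smin_bound: "smin B * norm x \<le> norm ((B::complex^'n^'n) *v x)"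
proof (rule smin_props[of B])
  fix v assume "norm v = 1" "norm (B *v v) = smin B" and h: "\<And>x. smin B * norm x \<le> norm (B *v x)"
  show "smin B * norm x \<le> norm (B *v x)" by (rule h)
qed

lemma no_max:
  fixes A :: "complex^'n^'n"
  assumes opn: "open \<Omega>" and sub: "\<Omega> \<subseteq> - mspectrum A" and z0: "z0 \<in> \<Omega>"
    and mx: "\<And>\<zeta>. \<zeta> \<in> \<Omega> \<Longrightarrow> smax (resolvent A \<zeta>) \<le> smax (resolvent A z0)"
  shows False
proof -
  let ?S = "{z. det (A - mat z) \<noteq> 0}"
  have OmS: "\<Omega> \<subseteq> ?S" using sub det_nz_of_nspec by auto
  have eqS: "?S = UNIV - {z. det (A - mat z) = 0}" by auto
  have openS: "open ?S" unfolding eqS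
    by (intro open_Diff open_UNIV finite_imp_closed spec_finite)
  have connS: "connected ?S" unfolding eqS
    by (rule connected_open_delete_finite) (auto simp: spec_finite)
  obtain v0 where nv0: "norm v0 = 1" and sv0: "norm (resolvent A z0 *v v0) = smax (resolvent A z0)"
    using smax_props[of "resolvent A z0"] by blast
  define \<sigma> where "\<sigma> = smax (resolvent A z0)"
  define w where "w = resolvent A z0 *v v0"
  have nz0: "det (A - mat z0) \<noteq> 0" using OmS z0 by auto
  have nw: "norm w = \<sigma>" using sv0 by (simp add: w_def \<sigma>_def)
  have "w \<noteq> 0"
  proof
    assume "w = 0"
    then have "v0 = 0" using res_solves(1)[OF nz0, of v0] by (simp add: w_def)
    then show False using nv0 by simp
  qed
  then have spos: "\<sigma> > 0" using nw by auto
  define g where "g z = (\<Sum>i\<in>UNIV. cnj (w$i) * (resolvent A z *v v0)$i)" for z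
  have holo: "g holomorphic_on ?S"
    unfolding g_def by (intro holomorphic_on_sum holomorphic_on_mult holomorphic_on_const res_holo)
  have gz0: "g z0 = complex_of_real (\<sigma>^2)"
    unfolding g_def w_def[symmetric] using self_sum[of w] nw by simp
  have gb: "norm (g z) \<le> \<sigma> * norm (resolvent A z *v v0)" for z
    unfolding g_def using complex_cs[of w] nw by simp
  have "norm (g \<zeta>) \<le> norm (g z0)" if "\<zeta> \<in> \<Omega>" for \<zeta>
  proof -
    note bnd = smax_bound[of "resolvent A \<zeta>"]
    have "norm (g \<zeta>) \<le> \<sigma> * norm (resolvent A \<zeta> *v v0)" by (rule gb)
    also have "\<dots> \<le> \<sigma> * smax (resolvent A \<zeta>)" using bnd[of v0] nv0 spos by simp
    also have "\<dots> \<le> \<sigma> * \<sigma>" using mx[OF that] spos by (simp add: \<sigma>_def)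
    also have "\<dots> = norm (g z0)" unfolding gz0 norm_of_real by (simp add: power2_eq_square)
    finally show ?thesis .
  qed
  then have "g constant_on ?S"
    by (intro maximum_modulus_principle[OF holo openS connS opn OmS z0]) auto
  then obtain c where c: "\<And>z. z \<in> ?S \<Longrightarrow> g z = c" unfolding constant_on_def by blast
  obtain u where nu: "norm (A *v u) = smax A" using smax_props[of A] by blast
  have sA: "smax A \<ge> 0" unfolding nu[symmetric] by (rule norm_ge_zero)
  define z1 where "z1 = complex_of_real (smax A + 1/\<sigma> + 1)"
  have isg: "1/\<sigma> > 0" using spos by simp
  have "norm z1 = \<bar>smax A + 1/\<sigma> + 1\<bar>" unfolding z1_def by (rule norm_of_real)
  then have nz1: "norm z1 = smax A + 1/\<sigma> + 1" using sA isg by simp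
  then have lt: "smax A < norm z1" using isg by linarith
  have z1S: "z1 \<in> ?S" using large_z(1)[OF lt] by simp
  have "norm (resolvent A z1 *v v0) \<le> norm v0 / (norm z1 - smax A)" by (rule large_z(2)[OF lt])
  also have "\<dots> = 1 / (1/\<sigma> + 1)" using nv0 nz1 by simp
  finally have r1: "norm (resolvent A z1 *v v0) \<le> 1 / (1/\<sigma> + 1)" .
  have "\<sigma> * norm (resolvent A z1 *v v0) \<le> \<sigma> * (1 / (1/\<sigma> + 1))"
    by (rule mult_left_mono[OF r1]) (use spos in simp)
  then have "norm (g z1) \<le> \<sigma> * (1 / (1/\<sigma> + 1))"
    using gb[of z1] by linarith
  also have "\<dots> < \<sigma> * \<sigma>" using spos by (simp add: field_simps)
  finally have "norm (g z1) < \<sigma> * \<sigma>" .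
  moreover have "g z1 = g z0" using c z1S OmS z0 by auto
  ultimately show False using gz0 spos by (simp add: power2_eq_square norm_mult)
qed

lemma no_min:
  fixes A :: "complex^'n^'n"
  assumes opn: "open \<Omega>" and sub: "\<Omega> \<subseteq> - mspectrum A" and z0: "z0 \<in> \<Omega>"
    and mn: "\<And>\<zeta>. \<zeta> \<in> \<Omega> \<Longrightarrow> smin (resolvent A z0) \<le> smin (resolvent A \<zeta>)"
  shows False
proof -
  have nzO: "det (A - mat z) \<noteq> 0" if "z \<in> \<Omega>" for z using sub that det_nz_of_nspec by auto
  obtain w0 where nw0: "norm w0 = 1" and sw0: "norm (resolvent A z0 *v w0) = smin (resolvent A z0)"
    using smin_props[of "resolvent A z0"] by blast
  define m where "m = smin (resolvent A z0)"
  define y0 where "y0 = resolvent A z0 *v w0"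
  have ny0: "norm y0 = m" using sw0 by (simp add: y0_def m_def)
  have Ay0: "(A - mat z0) *v y0 = w0" unfolding y0_def by (rule res_solves(1)[OF nzO[OF z0]])
  have "y0 \<noteq> 0"
  proof
    assume "y0 = 0"
    then have "w0 = 0" using Ay0 by simp
    then show False using nw0 by simp
  qed
  then have mpos: "m > 0" using ny0 by auto
  have le1: "norm ((A - mat \<zeta>) *v y0) \<le> 1" if "\<zeta> \<in> \<Omega>" for \<zeta>
  proof -
    define x where "x = (A - mat \<zeta>) *v y0"
    have Rx: "resolvent A \<zeta> *v x = y0" unfolding x_def by (rule res_solves(2)[OF nzO[OF that]])
    note bnd = smin_bound[of "resolvent A \<zeta>"]
    have "m * norm x \<le> smin (resolvent A \<zeta>) * norm x"
      using mn[OF that] by (simp add: m_def mult_right_mono)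
    also have "\<dots> \<le> m" using bnd[of x] Rx ny0 by simp
    finally have "m * norm x \<le> m * 1" by simp
    then show ?thesis using mpos unfolding x_def by (simp only: mult_le_cancel_left_pos)
  qed
  obtain e where e: "e > 0" "ball z0 e \<subseteq> \<Omega>" using opn z0 open_contains_ball by blast
  define h where "h = e / 2"
  have h: "h > 0" "h < e" using e by (auto simp: h_def)
  have i1: "z0 + complex_of_real h \<in> \<Omega>" and i2: "z0 + complex_of_real (-h) \<in> \<Omega>"
    using e h by (auto simp: dist_norm intro!: subsetD[OF e(2)])
  have "(A - mat (z0 + complex_of_real h)) *v y0 = w0 - h *\<^sub>R y0"
    by (simp only: shift_eq Ay0 ofreal_scalar)
  then have p1: "norm (w0 - h *\<^sub>R y0) \<le> 1" using le1[OF i1] by simp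
  have "(A - mat (z0 + complex_of_real (-h))) *v y0 = w0 - (-h) *\<^sub>R y0"
    by (simp only: shift_eq Ay0 ofreal_scalar)
  then have p2: "norm (w0 + h *\<^sub>R y0) \<le> 1" using le1[OF i2] by simp
  have "(norm (w0 - h *\<^sub>R y0))^2 + (norm (w0 + h *\<^sub>R y0))^2 = 2 + 2 * (h * m)^2"
    by (simp add: parallelogram_vec nw0 ny0 power_mult_distrib)
  moreover have "(norm (w0 - h *\<^sub>R y0))^2 \<le> 1" "(norm (w0 + h *\<^sub>R y0))^2 \<le> 1"
    using p1 p2 by (simp_all add: power_le_one)
  ultimately have "(h * m)^2 \<le> 0" by linarith
  then show False using h mpos by simp
qed


theorem theorem12:
  fixes A :: "complex^'n^'n" and \<Omega> :: "complex set"
  assumes "open \<Omega>" and "connected \<Omega>" and "\<Omega> \<noteq> {}"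
    and "\<Omega> \<subseteq> - mspectrum A"
  shows "(\<forall>z\<in>\<Omega>.
            ereal (smax (resolvent A z)) < (SUP \<zeta>\<in>\<Omega>. ereal (smax (resolvent A \<zeta>))) \<and>
            ereal (smin (resolvent A z)) > (INF \<zeta>\<in>\<Omega>. ereal (smin (resolvent A \<zeta>))))
         \<and> \<not> (\<exists>c. \<forall>z\<in>\<Omega>. smax (resolvent A z) = c)
         \<and> \<not> (\<exists>c. \<forall>z\<in>\<Omega>. smin (resolvent A z) = c)"
proof -
  have P1: "ereal (smax (resolvent A z)) < (SUP \<zeta>\<in>\<Omega>. ereal (smax (resolvent A \<zeta>)))"
    if z: "z \<in> \<Omega>" for z
  proof (rule ccontr)
    assume "\<not> ereal (smax (resolvent A z)) < (SUP \<zeta>\<in>\<Omega>. ereal (smax (resolvent A \<zeta>)))"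
    then have le: "(SUP \<zeta>\<in>\<Omega>. ereal (smax (resolvent A \<zeta>))) \<le> ereal (smax (resolvent A z))"
      by (simp add: not_less)
    have "smax (resolvent A \<zeta>) \<le> smax (resolvent A z)" if "\<zeta> \<in> \<Omega>" for \<zeta>
      using order_trans[OF SUP_upper[OF that] le] by simp
    then show False using no_max[OF assms(1) assms(4) z] by blast
  qed
  have P2: "ereal (smin (resolvent A z)) > (INF \<zeta>\<in>\<Omega>. ereal (smin (resolvent A \<zeta>)))"
    if z: "z \<in> \<Omega>" for z
  proof (rule ccontr)
    assume "\<not> ereal (smin (resolvent A z)) > (INF \<zeta>\<in>\<Omega>. ereal (smin (resolvent A \<zeta>)))"
    then have le: "ereal (smin (resolvent A z)) \<le> (INF \<zeta>\<in>\<Omega>. ereal (smin (resolvent A \<zeta>)))"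
      by (simp add: not_less)
    have "smin (resolvent A z) \<le> smin (resolvent A \<zeta>)" if "\<zeta> \<in> \<Omega>" for \<zeta>
      using order_trans[OF le INF_lower[OF that]] by simp
    then show False using no_min[OF assms(1) assms(4) z] by blast
  qed
  obtain z where z: "z \<in> \<Omega>" using assms(3) by blast
  have P3: "\<not> (\<exists>c. \<forall>z\<in>\<Omega>. smax (resolvent A z) = c)"
  proof
    assume "\<exists>c. \<forall>z\<in>\<Omega>. smax (resolvent A z) = c"
    then obtain c where c: "\<And>\<zeta>. \<zeta> \<in> \<Omega> \<Longrightarrow> smax (resolvent A \<zeta>) = c" by blast
    have "smax (resolvent A \<zeta>) \<le> smax (resolvent A z)" if "\<zeta> \<in> \<Omega>" for \<zeta>
      using c[OF that] c[OF z] by simp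
    then show False using no_max[OF assms(1) assms(4) z] by blast
  qed
  have P4: "\<not> (\<exists>c. \<forall>z\<in>\<Omega>. smin (resolvent A z) = c)"
  proof
    assume "\<exists>c. \<forall>z\<in>\<Omega>. smin (resolvent A z) = c"
    then obtain c where c: "\<And>\<zeta>. \<zeta> \<in> \<Omega> \<Longrightarrow> smin (resolvent A \<zeta>) = c" by blast
    have "smin (resolvent A z) \<le> smin (resolvent A \<zeta>)" if "\<zeta> \<in> \<Omega>" for \<zeta>
      using c[OF that] c[OF z] by simp
    then show False using no_min[OF assms(1) assms(4) z] by blast
  qed
  show ?thesis using P1 P2 P3 P4 by blast
qed

end
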